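(* Let $P\in\mathbb{R}^{n\times n}$ be a sub-stochastic matrix, $\gamma\in[0,1)$, $c\in\mathbb{R}^n$ arbitrary, and $v\in\mathbb{R}^n$ the unique solution of $v=c+\gamma Pv$. Let $\pi\in\mathbb{R}^n$ be a sub-stochastic vector and $z\in\mathbb{R}$ a scalar such that $v_k>z+\gamma\pi^Tv$ for some $k\in\{1,\dots,n\}$. Let $\widehat P$ be the matrix obtained from $P$ by replacing its $k$-th row with $\pi^T$, $\widehat c$ the vector obtained from $c$ by replacing its $k$-th entry with $z$, and $\widehat v$ the unique solution of $\widehat v=\widehat c+\gamma\widehat P\widehat v$. Then $$\widehat v_k<c_k+\gamma\sum_{j=1}^nP_{kj}\widehat v_j .$$
   Context: A sub-stochastic matrix is a matrix with nonnegative entries and all row sums at most $1$. A sub-stochastic vector is a nonnegative vector whose entries sum to at most $1$. *)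

theory Defs
  imports "HOL-Analysis.Analysis"
begin

definition substochastic_matrix :: "real^'n^'n \<Rightarrow> bool" where
  "substochastic_matrix P \<longleftrightarrow>
     (\<forall>i j. 0 \<le> P $ i $ j) \<and> (\<forall>i. (\<Sum>j\<in>UNIV. P $ i $ j) \<le> 1)"

definition substochastic_vector :: "real^'n \<Rightarrow> bool" where
  "substochastic_vector x \<longleftrightarrow> (\<forall>i. 0 \<le> x $ i) \<and> (\<Sum>i\<in>UNIV. x $ i) \<le> 1"

end

theory Submission
  imports Defs
begin

lemma key:
  fixes P Q :: "'n::finite \<Rightarrow> 'n \<Rightarrow> real" and d :: "'n \<Rightarrow> real" and \<gamma> :: real and k :: 'n
  assumes Pn: "\<And>i j. 0 \<le> P i j" and Ps: "\<And>i. (\<Sum>j\<in>UNIV. P i j) \<le> 1"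
    and pn: "\<And>j. 0 \<le> p j" and ps: "(\<Sum>j\<in>UNIV. p j) \<le> 1"
    and g0: "0 \<le> \<gamma>" and g1: "\<gamma> < 1"
    and hk: "d k \<ge> \<gamma> * (\<Sum>j\<in>UNIV. P k j * d j)"
    and hi: "\<And>i. i \<noteq> k \<Longrightarrow> d i = \<gamma> * (\<Sum>j\<in>UNIV. P i j * d j)"
    and hp: "d k < \<gamma> * (\<Sum>j\<in>UNIV. p j * d j)"
  shows False
proof -
  define m where "m = Min (range d)"
  define M where "M = Max (range d)"
  have mle: "\<And>j. m \<le> d j" unfolding m_def by simp
  have Mge: "\<And>j. d j \<le> M" unfolding M_def by simp
  have "m \<in> range d" unfolding m_def by (rule Min_in) auto
  then obtain i0 where i0: "d i0 = m" by auto
  have "M \<in> range d" unfolding M_def by (rule Max_in) auto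
  then obtain i1 where i1: "d i1 = M" by auto
  have ge: "\<And>i. d i \<ge> \<gamma> * (\<Sum>j\<in>UNIV. P i j * d j)"
    using hk hi by (metis order_refl)
  have m0: "m \<ge> 0"
  proof (rule ccontr)
    assume neg: "\<not> m \<ge> 0"
    have "(\<Sum>j\<in>UNIV. P i0 j * d j) \<ge> (\<Sum>j\<in>UNIV. P i0 j * m)"
      by (rule sum_mono) (simp add: Pn mle mult_left_mono)
    also have "(\<Sum>j\<in>UNIV. P i0 j * m) = (\<Sum>j\<in>UNIV. P i0 j) * m"
      by (simp add: sum_distrib_right)
    also have "\<dots> \<ge> m" using neg Ps[of i0] by (simp add: mult_le_cancel_right1)
    finally have "(\<Sum>j\<in>UNIV. P i0 j * d j) \<ge> m" .
    hence "\<gamma> * (\<Sum>j\<in>UNIV. P i0 j * d j) \<ge> \<gamma> * m" using g0 by (simp add: mult_left_mono)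
    with ge[of i0] i0 have "m \<ge> \<gamma> * m" by simp
    moreover have "\<gamma> * m > 1 * m" using neg g1 by (intro mult_strict_right_mono_neg) auto
    ultimately show False by simp
  qed
  have M0: "M \<ge> 0" using mle[of i1] i1 m0 by simp
  have rowle: "\<And>i. (\<Sum>j\<in>UNIV. P i j * d j) \<le> M"
  proof -
    fix i
    have "(\<Sum>j\<in>UNIV. P i j * d j) \<le> (\<Sum>j\<in>UNIV. P i j * M)"
      by (rule sum_mono) (simp add: Pn Mge mult_left_mono)
    also have "\<dots> = (\<Sum>j\<in>UNIV. P i j) * M" by (simp add: sum_distrib_right)
    also have "\<dots> \<le> M" using mult_right_mono[OF Ps[of i] M0] by simp
    finally show "(\<Sum>j\<in>UNIV. P i j * d j) \<le> M" .
  qed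
  have ple: "(\<Sum>j\<in>UNIV. p j * d j) \<le> M"
  proof -
    have "(\<Sum>j\<in>UNIV. p j * d j) \<le> (\<Sum>j\<in>UNIV. p j * M)"
      by (rule sum_mono) (simp add: pn Mge mult_left_mono)
    also have "\<dots> = (\<Sum>j\<in>UNIV. p j) * M" by (simp add: sum_distrib_right)
    also have "\<dots> \<le> M" using mult_right_mono[OF ps M0] by simp
    finally show ?thesis .
  qed
  have dk: "d k < \<gamma> * M" using hp mult_left_mono[OF ple g0] by linarith
  have all: "\<And>i. d i \<le> \<gamma> * M"
  proof -
    fix i show "d i \<le> \<gamma> * M"
    proof (cases "i = k")
      case True then show ?thesis using dk by simp
    next
      case False then show ?thesis using hi[OF False] rowle[of i] g0 by (simp add: mult_left_mono)
    qed
  qed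
  have "M \<le> \<gamma> * M" using all[of i1] i1 by simp
  have "M = 0"
  proof (rule ccontr)
    assume "M \<noteq> 0"
    hence "M > 0" using M0 by simp
    hence "\<gamma> * M < 1 * M" using g1 by (rule mult_strict_right_mono[rotated])
    thus False using \<open>M \<le> \<gamma> * M\<close> by simp
  qed
  hence "d k < 0" using dk by simp
  thus False using mle[of k] m0 by simp
qed

theorem lemma6:
  fixes P :: "real^'n^'n" and \<gamma> :: real and c v \<pi> vh :: "real^'n"
    and z :: real and k :: 'n
  assumes "substochastic_matrix P"
    and "0 \<le> \<gamma>" and "\<gamma> < 1"
    and "v = c + \<gamma> *\<^sub>R (P *v v)"
    and "substochastic_vector \<pi>"
    and "v $ k > z + \<gamma> * (\<pi> \<bullet> v)"
    and "vh = (\<chi> i. if i = k then z else c $ i)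
              + \<gamma> *\<^sub>R ((\<chi> i. if i = k then \<pi> else P $ i) *v vh)"
  shows "vh $ k < c $ k + \<gamma> * (\<Sum>j\<in>UNIV. P $ k $ j * vh $ j)"
proof (rule ccontr)
  assume neg: "\<not> ?thesis"
  define d where "d = (\<lambda>i. vh $ i - v $ i)"
  have vi: "\<And>i. v $ i = c $ i + \<gamma> * (\<Sum>j\<in>UNIV. P $ i $ j * v $ j)"
  proof -
    fix i
    have "v $ i = (c + \<gamma> *\<^sub>R (P *v v)) $ i" using assms(4) by (rule arg_cong[where f="\<lambda>x. x $ i"])
    also have "\<dots> = c $ i + \<gamma> * (\<Sum>j\<in>UNIV. P $ i $ j * v $ j)"
      by (simp add: matrix_vector_mult_def)
    finally show "v $ i = c $ i + \<gamma> * (\<Sum>j\<in>UNIV. P $ i $ j * v $ j)" .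
  qed
  have vhe: "\<And>i. vh $ i = ((\<chi> i. if i = k then z else c $ i)
              + \<gamma> *\<^sub>R ((\<chi> i. if i = k then \<pi> else P $ i) *v vh)) $ i"
    using assms(7) by (rule arg_cong[where f="\<lambda>x. x $ i" for i])
  have vhk: "vh $ k = z + \<gamma> * (\<Sum>j\<in>UNIV. \<pi> $ j * vh $ j)"
    unfolding vhe[of k] by (simp add: matrix_vector_mult_def)
  have vhi: "\<And>i. i \<noteq> k \<Longrightarrow> vh $ i = c $ i + \<gamma> * (\<Sum>j\<in>UNIV. P $ i $ j * vh $ j)"
    by (subst vhe) (simp add: matrix_vector_mult_def)
  have pv: "\<pi> \<bullet> v = (\<Sum>j\<in>UNIV. \<pi> $ j * v $ j)" by (simp add: inner_vec_def)
  have lin: "\<And>a. (\<Sum>j\<in>UNIV. a j * d j) = (\<Sum>j\<in>UNIV. a j * vh $ j) - (\<Sum>j\<in>UNIV. a j * v $ j)"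
    unfolding d_def by (simp add: right_diff_distrib sum_subtractf)
  show False
  proof (rule key[of "\<lambda>i j. P $ i $ j" "\<lambda>j. \<pi> $ j" \<gamma> k d])
    show "\<And>i j. 0 \<le> P $ i $ j" "\<And>i. (\<Sum>j\<in>UNIV. P $ i $ j) \<le> 1"
      using assms(1) unfolding substochastic_matrix_def by auto
    show "\<And>j. 0 \<le> \<pi> $ j" "(\<Sum>j\<in>UNIV. \<pi> $ j) \<le> 1"
      using assms(5) unfolding substochastic_vector_def by auto
    show "0 \<le> \<gamma>" "\<gamma> < 1" by fact+
    have dd: "\<And>i. d i = vh $ i - v $ i" by (simp add: d_def)
    have ga: "\<And>a. \<gamma> * (\<Sum>j\<in>UNIV. a j * d j) = \<gamma> * (\<Sum>j\<in>UNIV. a j * vh $ j) - \<gamma> * (\<Sum>j\<in>UNIV. a j * v $ j)"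
      by (simp only: lin right_diff_distrib)
    show "d k \<ge> \<gamma> * (\<Sum>j\<in>UNIV. P $ k $ j * d j)"
      using neg vi[of k] ga[of "\<lambda>j. P $ k $ j"] dd[of k] by linarith
    show "\<And>i. i \<noteq> k \<Longrightarrow> d i = \<gamma> * (\<Sum>j\<in>UNIV. P $ i $ j * d j)"
    proof -
      fix i assume "i \<noteq> k"
      thus "d i = \<gamma> * (\<Sum>j\<in>UNIV. P $ i $ j * d j)"
        using vi[of i] vhi[of i] ga[of "\<lambda>j. P $ i $ j"] dd[of i] by linarith
    qed
    show "d k < \<gamma> * (\<Sum>j\<in>UNIV. \<pi> $ j * d j)"
      using vhk assms(6) arg_cong[OF pv, of "\<lambda>x. \<gamma> * x"] ga[of "\<lambda>j. \<pi> $ j"] dd[of k] by linarith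
  qed
qed

end
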